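(* For each positive integer $n$ let $(\Theta_n(t),t\ge0)$ be Kingman's coalescent started from $n$ singletons, and for $1\le k\le n$ let $T_k=\inf\{t:|\Theta_n(t)|=k\}$, where $|\pi|$ is the number of blocks of $\pi$. For every $\epsilon>0$ there exists a constant $C>0$ such that, for every $n$, with probability at least $1-\epsilon$, $$\Big|T_k-\Big(\frac2k-\frac2n\Big)\Big|\le\frac{C}{n^{9/8}}$$ for all integers $k$ with $n^{3/4}\le k\le n$.
   Context: Kingman's coalescent $(\Theta_n(t),t\ge0)$ is the continuous-time time-homogeneous Markov chain on partitions of $\{1,\dots,n\}$ with $\Theta_n(0)=\{\{1\},\dots,\{n\}\}$, in which each pair of blocks merges into one at rate $1$ and no other transitions occur. *)

theory Defs
  imports "HOL-Probability.Probability"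
begin

text \<open>Partitions of {1..n} are represented as sets of blocks (nat set set).\<close>

definition singletons :: "nat \<Rightarrow> nat set set" where
  "singletons n = (\<lambda>i. {i}) ` {1..n}"

definition merges :: "nat set set \<Rightarrow> nat set set set" where
  "merges q = {insert (A \<union> B) (q - {A, B}) | A B. A \<in> q \<and> B \<in> q \<and> A \<noteq> B}"

text \<open>Jump-chain transition probability of Kingman's coalescent: each of the
  (|q| choose 2) pairs of blocks merges with equal probability.\<close>
definition merge_prob :: "nat set set \<Rightarrow> nat set set \<Rightarrow> real" where
  "merge_prob q q' = (if q' \<in> merges q then 1 / real (card q choose 2) else 0)"

text \<open>Jump-hold description of Kingman's coalescent started from n singletons:
  X m is the state after m merges (jump chain), S m the holding time in state X m,
  which is exponential with rate (|X m| choose 2) (each pair merges at rate 1),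
  independent of everything else given the jump chain.\<close>
definition kingman_jump_hold ::
  "'a measure \<Rightarrow> nat \<Rightarrow> (nat \<Rightarrow> 'a \<Rightarrow> nat set set) \<Rightarrow> (nat \<Rightarrow> 'a \<Rightarrow> real) \<Rightarrow> bool" where
  "kingman_jump_hold M n X S \<longleftrightarrow>
     prob_space M \<and>
     (\<forall>m. X m \<in> M \<rightarrow>\<^sub>M count_space UNIV) \<and>
     (\<forall>m. S m \<in> borel_measurable M) \<and>
     (\<forall>\<omega>\<in>space M. X 0 \<omega> = singletons n) \<and>
     (\<forall>p s. p 0 = singletons n \<longrightarrow>
        measure M {\<omega> \<in> space M. \<forall>m<n-1. X (Suc m) \<omega> = p (Suc m) \<and> S m \<omega> > s m}
        = (\<Prod>m<n-1. merge_prob (p m) (p (Suc m))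
              * exp (- real (card (p m) choose 2) * max 0 (s m))))"

text \<open>The continuous-time process: Theta(t) = X (number of jumps by time t),
  the j-th jump (j < n-1) happening at time S 0 + ... + S j.\<close>
definition kingman_proc ::
  "nat \<Rightarrow> (nat \<Rightarrow> 'a \<Rightarrow> nat set set) \<Rightarrow> (nat \<Rightarrow> 'a \<Rightarrow> real) \<Rightarrow> real \<Rightarrow> 'a \<Rightarrow> nat set set" where
  "kingman_proc n X S t \<omega> = X (card {j. j < n - 1 \<and> (\<Sum>i\<le>j. S i \<omega>) \<le> t}) \<omega>"

definition hit_time ::
  "nat \<Rightarrow> (nat \<Rightarrow> 'a \<Rightarrow> nat set set) \<Rightarrow> (nat \<Rightarrow> 'a \<Rightarrow> real) \<Rightarrow> nat \<Rightarrow> 'a \<Rightarrow> real" where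
  "hit_time n X S k \<omega> = Inf {t. 0 \<le> t \<and> card (kingman_proc n X S t \<omega>) = k}"

end

theory Submission
  imports Defs
begin


definition pwf :: "nat set set \<Rightarrow> bool" where
  "pwf q \<longleftrightarrow> finite q \<and> {} \<notin> q \<and> (\<forall>A\<in>q. \<forall>B\<in>q. A \<noteq> B \<longrightarrow> A \<inter> B = {})"

lemma merges_step:
  assumes "pwf q" "q' \<in> merges q"
  shows "pwf q' \<and> card q' = card q - 1"
proof -
  from assms(2) obtain A B where AB: "A \<in> q" "B \<in> q" "A \<noteq> B" "q' = insert (A \<union> B) (q - {A, B})"
    unfolding merges_def by blast
  have fin: "finite q" and ne: "{} \<notin> q" and dj: "\<And>C D. C \<in> q \<Longrightarrow> D \<in> q \<Longrightarrow> C \<noteq> D \<Longrightarrow> C \<inter> D = {}"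
    using assms(1) unfolding pwf_def by auto
  have "A \<noteq> {}" "B \<noteq> {}" using ne AB by auto
  have "A \<inter> B = {}" using dj AB by auto
  have notin: "A \<union> B \<notin> q"
  proof
    assume C: "A \<union> B \<in> q"
    have "A \<union> B \<noteq> A" using \<open>B \<noteq> {}\<close> \<open>A \<inter> B = {}\<close> by blast
    then have "(A \<union> B) \<inter> A = {}" using dj[OF C AB(1)] by blast
    then show False using \<open>A \<noteq> {}\<close> by blast
  qed
  have c1: "card (q - {A, B}) = card q - 2" using AB fin by (simp add: card_Diff_subset)
  have c2: "card q' = card (q - {A,B}) + 1" using notin fin AB(4) by simp
  have "card q \<ge> 2"
  proof -
    have "card {A, B} \<le> card q" using AB fin by (intro card_mono) auto
    then show ?thesis using AB(3) by simp
  qed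
  then have "card q' = card q - 1" using c1 c2 by simp
  moreover have "pwf q'"
    unfolding pwf_def AB(4)
  proof (intro conjI ballI impI)
    show "finite (insert (A \<union> B) (q - {A, B}))" using fin by simp
    show "{} \<notin> insert (A \<union> B) (q - {A, B})" using ne \<open>A \<noteq> {}\<close> by auto
    fix C D assume C: "C \<in> insert (A \<union> B) (q - {A, B})" and D: "D \<in> insert (A \<union> B) (q - {A, B})" and "C \<noteq> D"
    then show "C \<inter> D = {}"
      using dj AB by auto
  qed
  ultimately show ?thesis by simp
qed

lemma card_merges:
  assumes "pwf q"
  shows "card (merges q) = card q choose 2"
proof -
  define f where "f x = insert (\<Union>x) (q - x)" for x :: "nat set set"
  define P where "P = {x. x \<subseteq> q \<and> card x = 2}"
  have fin: "finite q" and ne: "{} \<notin> q" and dj: "\<And>C D. C \<in> q \<Longrightarrow> D \<in> q \<Longrightarrow> C \<noteq> D \<Longrightarrow> C \<inter> D = {}"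
    using assms(1) unfolding pwf_def by auto
  have img: "merges q = f ` P"
  proof
    show "merges q \<subseteq> f ` P"
    proof
      fix r assume "r \<in> merges q"
      then obtain A B where AB: "A \<in> q" "B \<in> q" "A \<noteq> B" "r = insert (A \<union> B) (q - {A, B})"
        unfolding merges_def by blast
      then have "r = f {A,B}" "{A,B} \<in> P" by (auto simp: f_def P_def)
      then show "r \<in> f ` P" by blast
    qed
    show "f ` P \<subseteq> merges q"
    proof
      fix r assume "r \<in> f ` P"
      then obtain x where x: "x \<in> P" "r = f x" by blast
      then obtain A B where "x = {A, B}" "A \<noteq> B" unfolding P_def by (auto simp: card_2_iff)
      then show "r \<in> merges q" using x unfolding merges_def f_def P_def by auto
    qed
  qed
  have inj: "inj_on f P"
  proof
    fix x y assume x: "x \<in> P" and y: "y \<in> P" and e: "f x = f y"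
    have key: "q - f z = z" if z: "z \<in> P" for z
    proof -
      obtain A B where AB: "z = {A, B}" "A \<noteq> B" using z unfolding P_def by (auto simp: card_2_iff)
      have "A \<in> q" "B \<in> q" using z AB unfolding P_def by auto
      then have "A \<noteq> {}" "B \<noteq> {}" "A \<inter> B = {}" using ne dj AB by auto
      then have "A \<union> B \<noteq> A" "A \<union> B \<noteq> B" by blast+
      then show ?thesis using AB z unfolding f_def P_def by auto
    qed
    show "x = y" using key[OF x] key[OF y] e by metis
  qed
  have "card (merges q) = card P" unfolding img by (rule card_image[OF inj])
  also have "card P = card q choose 2" unfolding P_def by (rule n_subsets[OF fin])
  finally show ?thesis .
qed

lemma finite_merges: "finite q \<Longrightarrow> finite (merges q)"
proof -
  assume "finite q"
  have "merges q \<subseteq> (\<lambda>(A,B). insert (A \<union> B) (q - {A, B})) ` (q \<times> q)"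
    unfolding merges_def by auto
  moreover have "finite ((\<lambda>(A,B). insert (A \<union> B) (q - {A, B})) ` (q \<times> q))" using \<open>finite q\<close> by simp
  ultimately show ?thesis by (rule finite_subset)
qed

lemma pwf_singletons: "pwf (singletons n)" "card (singletons n) = n"
  unfolding pwf_def singletons_def by (auto simp: card_image)



definition paths :: "nat set set \<Rightarrow> nat \<Rightarrow> (nat \<Rightarrow> nat set set) set" where
  "paths q N = {p. p 0 = q \<and> (\<forall>m<N. p (Suc m) \<in> merges (p m)) \<and> (\<forall>m>N. p m = {})}"

definition pcons :: "nat set set \<Rightarrow> (nat \<Rightarrow> nat set set) \<Rightarrow> nat \<Rightarrow> nat set set" where
  "pcons q p = (\<lambda>m. case m of 0 \<Rightarrow> q | Suc m' \<Rightarrow> p m')"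

lemma paths_0: "paths q 0 = {\<lambda>m. if m = 0 then q else {}}"
  unfolding paths_def by (auto simp: fun_eq_iff)

lemma pcons_inj: "inj (pcons q)"
  by (rule injI) (metis (no_types, lifting) fun_eq_iff nat.simps(5) pcons_def)

lemma paths_Suc: "paths q (Suc N) = (\<Union>q'\<in>merges q. pcons q ` paths q' N)"
proof
  show "paths q (Suc N) \<subseteq> (\<Union>q'\<in>merges q. pcons q ` paths q' N)"
  proof
    fix p assume p: "p \<in> paths q (Suc N)"
    have "p = pcons q (\<lambda>m. p (Suc m))"
      using p by (auto simp: fun_eq_iff pcons_def paths_def split: nat.split)
    moreover have "(\<lambda>m. p (Suc m)) \<in> paths (p 1) N"
      using p unfolding paths_def by auto
    moreover have "p 1 \<in> merges q" using p unfolding paths_def by auto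
    ultimately show "p \<in> (\<Union>q'\<in>merges q. pcons q ` paths q' N)" by blast
  qed
  show "(\<Union>q'\<in>merges q. pcons q ` paths q' N) \<subseteq> paths q (Suc N)"
  proof
    fix p assume "p \<in> (\<Union>q'\<in>merges q. pcons q ` paths q' N)"
    then obtain q' p' where q': "q' \<in> merges q" "p' \<in> paths q' N" "p = pcons q p'" by blast
    show "p \<in> paths q (Suc N)"
      unfolding paths_def
    proof (intro CollectI conjI allI impI)
      show "p 0 = q" using q' by (simp add: pcons_def)
      fix m
      show "m < Suc N \<Longrightarrow> p (Suc m) \<in> merges (p m)"
        using q' by (cases m) (auto simp: pcons_def paths_def)
      show "Suc N < m \<Longrightarrow> p m = {}"
        using q' by (cases m) (auto simp: pcons_def paths_def)
    qed
  qed
qed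

lemma finite_paths: "pwf q \<Longrightarrow> finite (paths q N)"
proof (induction N arbitrary: q)
  case 0
  then show ?case by (simp add: paths_0)
next
  case (Suc N)
  have "finite (merges q)" using Suc.prems finite_merges pwf_def by blast
  moreover have "\<And>q'. q' \<in> merges q \<Longrightarrow> finite (paths q' N)"
    using Suc merges_step by blast
  ultimately show ?case unfolding paths_Suc by blast
qed

lemma path_props:
  assumes "pwf q" "p \<in> paths q N" "m \<le> N"
  shows "pwf (p m) \<and> card (p m) = card q - m"
  using assms(3)
proof (induction m)
  case 0
  then show ?case using assms by (simp add: paths_def)
next
  case (Suc m)
  then have "p (Suc m) \<in> merges (p m)" using assms(2) by (simp add: paths_def)
  then show ?case using Suc merges_step by fastforce
qed

lemma paths_sum:
  assumes "pwf q" "N < card q"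
  shows "(\<Sum>p\<in>paths q N. \<Prod>m<N. merge_prob (p m) (p (Suc m))) = 1"
  using assms
proof (induction N arbitrary: q)
  case 0
  then show ?case by (simp add: paths_0)
next
  case (Suc N)
  have fm: "finite (merges q)" using Suc.prems finite_merges pwf_def by blast
  have q'props: "pwf q' \<and> card q' = card q - 1" if "q' \<in> merges q" for q'
    using merges_step Suc.prems that by blast
  have bpos: "real (card q choose 2) > 0" using Suc.prems by simp
  have "(\<Sum>p\<in>paths q (Suc N). \<Prod>m<Suc N. merge_prob (p m) (p (Suc m)))
      = (\<Sum>q'\<in>merges q. \<Sum>p\<in>pcons q ` paths q' N. \<Prod>m<Suc N. merge_prob (p m) (p (Suc m)))"
    unfolding paths_Suc
  proof (rule sum.UNION_disjoint)
    show "finite (merges q)" by fact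
    show "\<forall>i\<in>merges q. finite (pcons q ` paths i N)" using q'props finite_paths by blast
    show "\<forall>i\<in>merges q. \<forall>j\<in>merges q. i \<noteq> j \<longrightarrow> pcons q ` paths i N \<inter> pcons q ` paths j N = {}"
    proof (intro ballI impI)
      fix i j assume ij: "i \<in> merges q" "j \<in> merges q" "i \<noteq> j"
      show "pcons q ` paths i N \<inter> pcons q ` paths j N = {}"
      proof (rule ccontr)
        assume "pcons q ` paths i N \<inter> pcons q ` paths j N \<noteq> {}"
        then obtain a b where ab: "a \<in> paths i N" "b \<in> paths j N" "pcons q a = pcons q b" by blast
        then have "a = b" using pcons_inj by (meson injD)
        then show False using ab ij by (simp add: paths_def)
      qed
    qed
  qed
  also have "\<dots> = (\<Sum>q'\<in>merges q. \<Sum>p'\<in>paths q' N. 1 / real (card q choose 2) * (\<Prod>m<N. merge_prob (p' m) (p' (Suc m))))"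
  proof (rule sum.cong[OF refl])
    fix q' assume q': "q' \<in> merges q"
    show "(\<Sum>p\<in>pcons q ` paths q' N. \<Prod>m<Suc N. merge_prob (p m) (p (Suc m))) =
          (\<Sum>p'\<in>paths q' N. 1 / real (card q choose 2) * (\<Prod>m<N. merge_prob (p' m) (p' (Suc m))))"
      apply (subst sum.reindex)
       apply (meson inj_on_subset pcons_inj subset_UNIV)
      apply (rule sum.cong[OF refl])
      apply (subst prod.lessThan_Suc_shift)
      using q' by (simp add: pcons_def paths_def merge_prob_def)
  qed
  also have "\<dots> = (\<Sum>q'\<in>merges q. 1 / real (card q choose 2))"
  proof (rule sum.cong[OF refl])
    fix q' assume q': "q' \<in> merges q"
    have h: "(\<Sum>p'\<in>paths q' N. \<Prod>m<N. merge_prob (p' m) (p' (Suc m))) = 1"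
      using Suc.IH q'props[OF q'] Suc.prems by simp
    have "(\<Sum>p'\<in>paths q' N. 1 / real (card q choose 2) * (\<Prod>m<N. merge_prob (p' m) (p' (Suc m))))
       = 1 / real (card q choose 2) * (\<Sum>p'\<in>paths q' N. (\<Prod>m<N. merge_prob (p' m) (p' (Suc m))))"
      by (simp only: sum_distrib_left)
    also have "\<dots> = 1 / real (card q choose 2)" by (simp only: h mult_1_right)
    finally show "(\<Sum>p'\<in>paths q' N. 1 / real (card q choose 2) * (\<Prod>m<N. merge_prob (p' m) (p' (Suc m)))) = 1 / real (card q choose 2)" .
  qed
  also have "\<dots> = 1" using card_merges[OF Suc.prems(1)] bpos by simp
  finally show ?case .
qed



locale kjh =
  fixes M :: "'a measure" and n :: nat and X :: "nat \<Rightarrow> 'a \<Rightarrow> nat set set" and S :: "nat \<Rightarrow> 'a \<Rightarrow> real"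
  assumes kjh: "kingman_jump_hold M n X S"
begin

lemma ps: "prob_space M" using kjh unfolding kingman_jump_hold_def by blast

sublocale prob_space M by (rule ps)

lemma Xm[measurable]: "X m \<in> M \<rightarrow>\<^sub>M count_space UNIV"
  using kjh unfolding kingman_jump_hold_def by blast

lemma Sm[measurable]: "S m \<in> borel_measurable M"
  using kjh unfolding kingman_jump_hold_def by blast

lemma X0: "\<omega> \<in> space M \<Longrightarrow> X 0 \<omega> = singletons n"
  using kjh unfolding kingman_jump_hold_def by blast

lemma law: "p 0 = singletons n \<Longrightarrow>
   measure M {\<omega> \<in> space M. \<forall>m<n-1. X (Suc m) \<omega> = p (Suc m) \<and> S m \<omega> > s m}
        = (\<Prod>m<n-1. merge_prob (p m) (p (Suc m)) * exp (- real (card (p m) choose 2) * max 0 (s m)))"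
  using kjh unfolding kingman_jump_hold_def by blast

definition E :: "(nat \<Rightarrow> real) \<Rightarrow> (nat \<Rightarrow> nat set set) \<Rightarrow> 'a set" where
  "E s p = {\<omega> \<in> space M. \<forall>m<n-1. X (Suc m) \<omega> = p (Suc m) \<and> S m \<omega> > s m}"

lemma E_sets: "E s p \<in> sets M"
  unfolding E_def by measurable

definition V where "V = paths (singletons n) (n - 1)"

definition r :: "nat \<Rightarrow> real" where "r m = real ((n - m) choose 2)"

lemma V_finite: "finite V"
  unfolding V_def using finite_paths pwf_singletons by blast

lemma V_card: "p \<in> V \<Longrightarrow> m \<le> n - 1 \<Longrightarrow> card (p m) = n - m"
  unfolding V_def using path_props[OF pwf_singletons(1)] pwf_singletons(2) by metis

lemma V_sum: "n \<ge> 1 \<Longrightarrow> (\<Sum>p\<in>V. \<Prod>m<n-1. merge_prob (p m) (p (Suc m))) = 1"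
  unfolding V_def using paths_sum[OF pwf_singletons(1)] pwf_singletons(2) by simp

lemma E_disj: "disjoint_family_on (E s) V"
  unfolding disjoint_family_on_def
proof (intro ballI impI)
  fix p p' assume p: "p \<in> V" and p': "p' \<in> V" and ne: "p \<noteq> p'"
  then obtain k where k: "p k \<noteq> p' k" by (auto simp: fun_eq_iff)
  have "k \<noteq> 0" using p p' k by (auto simp: V_def paths_def)
  moreover have "\<not> k > n - 1" using p p' k by (auto simp: V_def paths_def)
  ultimately obtain m where m: "k = Suc m" "m < n - 1" by (cases k) auto
  show "E s p \<inter> E s p' = {}"
    using m k unfolding E_def by auto
qed

lemma E_measure: "n \<ge> 1 \<Longrightarrow> p \<in> V \<Longrightarrow> measure M (E s p) =
   (\<Prod>m<n-1. merge_prob (p m) (p (Suc m))) * (\<Prod>m<n-1. exp (- r m * max 0 (s m)))"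
proof -
  assume n: "n \<ge> 1" and p: "p \<in> V"
  have "measure M (E s p) = (\<Prod>m<n-1. merge_prob (p m) (p (Suc m)) * exp (- real (card (p m) choose 2) * max 0 (s m)))"
    unfolding E_def by (rule law) (use p in \<open>simp add: V_def paths_def\<close>)
  also have "\<dots> = (\<Prod>m<n-1. merge_prob (p m) (p (Suc m)) * exp (- r m * max 0 (s m)))"
    by (rule prod.cong[OF refl]) (simp add: V_card[OF p] r_def)
  also have "\<dots> = (\<Prod>m<n-1. merge_prob (p m) (p (Suc m))) * (\<Prod>m<n-1. exp (- r m * max 0 (s m)))"
    by (rule prod.distrib)
  finally show ?thesis .
qed

lemma UE_measure: "n \<ge> 1 \<Longrightarrow> measure M (\<Union>p\<in>V. E s p) = (\<Prod>m<n-1. exp (- r m * max 0 (s m)))"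
proof -
  assume n: "n \<ge> 1"
  have "measure M (\<Union>p\<in>V. E s p) = (\<Sum>p\<in>V. measure M (E s p))"
    by (rule measure_finite_Union) (auto simp: V_finite E_sets E_disj)
  also have "\<dots> = (\<Sum>p\<in>V. (\<Prod>m<n-1. merge_prob (p m) (p (Suc m))) * (\<Prod>m<n-1. exp (- r m * max 0 (s m))))"
    by (rule sum.cong[OF refl]) (rule E_measure[OF n])
  also have "\<dots> = (\<Sum>p\<in>V. (\<Prod>m<n-1. merge_prob (p m) (p (Suc m)))) * (\<Prod>m<n-1. exp (- r m * max 0 (s m)))"
    by (simp only: sum_distrib_right)
  also have "\<dots> = (\<Prod>m<n-1. exp (- r m * max 0 (s m)))" using V_sum[OF n] by simp
  finally show ?thesis .
qed

definition G where "G = (\<Union>p\<in>V. E (\<lambda>_. 0) p)"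

lemma G_sets: "G \<in> sets M"
  unfolding G_def using V_finite E_sets by blast

lemma G_prob: "n \<ge> 1 \<Longrightarrow> prob G = 1"
  unfolding G_def using UE_measure[of "\<lambda>_. 0"] by simp

lemma G_props: "\<omega> \<in> G \<Longrightarrow> \<omega> \<in> space M \<and> (\<forall>m<n-1. S m \<omega> > 0) \<and> (\<forall>m\<le>n-1. card (X m \<omega>) = n - m)"
proof -
  assume "\<omega> \<in> G"
  then obtain p where p: "p \<in> V" "\<omega> \<in> E (\<lambda>_. 0) p" unfolding G_def by blast
  have sp: "\<omega> \<in> space M" using p unfolding E_def by blast
  moreover have "\<forall>m<n-1. S m \<omega> > 0" using p unfolding E_def by blast
  moreover have "card (X m \<omega>) = n - m" if "m \<le> n - 1" for m
  proof (cases m)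
    case 0
    then show ?thesis using X0[OF sp] pwf_singletons(2) by simp
  next
    case (Suc k)
    then have "X m \<omega> = p m" using p that unfolding E_def by auto
    then show ?thesis using V_card[OF p(1) that] by simp
  qed
  ultimately show ?thesis by blast
qed

lemma surv: "n \<ge> 1 \<Longrightarrow> prob {\<omega> \<in> space M. \<forall>m<n-1. s m < S m \<omega>} = (\<Prod>m<n-1. exp (- r m * max 0 (s m)))"
proof -
  assume n: "n \<ge> 1"
  let ?A = "{\<omega> \<in> space M. \<forall>m<n-1. s m < S m \<omega>}"
  have Asets: "?A \<in> sets M" by measurable
  have AE: "AE \<omega> in M. \<omega> \<in> G" by (rule AE_prob_1[OF G_prob[OF n]])
  have "prob ?A = prob (?A \<inter> G)"
    by (rule measure_eq_AE) (use AE Asets G_sets in auto)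
  also have "?A \<inter> G = (\<Union>p\<in>V. E (\<lambda>m. max 0 (s m)) p)"
    unfolding G_def E_def by auto
  also have "prob \<dots> = (\<Prod>m<n-1. exp (- r m * max 0 (max 0 (s m))))"
    by (rule UE_measure[OF n])
  also have "\<dots> = (\<Prod>m<n-1. exp (- r m * max 0 (s m)))" by simp
  finally show ?thesis .
qed

end


context kjh
begin

lemma marginal:
  assumes n: "n \<ge> 1" and i: "i < n - 1"
  shows "prob {\<omega> \<in> space M. a < S i \<omega>} = exp (- r i * max 0 a)"
proof -
  define s where "s m = (if m = i then a else -1)" for m
  have AE: "AE \<omega> in M. \<omega> \<in> G" by (rule AE_prob_1[OF G_prob[OF n]])
  have "prob {\<omega> \<in> space M. a < S i \<omega>} = prob {\<omega> \<in> space M. \<forall>m<n-1. s m < S m \<omega>}"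
  proof (rule measure_eq_AE)
    show "AE \<omega> in M. (\<omega> \<in> {\<omega> \<in> space M. a < S i \<omega>}) = (\<omega> \<in> {\<omega> \<in> space M. \<forall>m<n - 1. s m < S m \<omega>})"
      using AE
    proof (rule AE_mp)
      show "AE \<omega> in M. \<omega> \<in> G \<longrightarrow> (\<omega> \<in> {\<omega> \<in> space M. a < S i \<omega>}) = (\<omega> \<in> {\<omega> \<in> space M. \<forall>m<n - 1. s m < S m \<omega>})"
      proof (rule AE_I2, rule impI)
        fix \<omega> assume "\<omega> \<in> G"
        then have "\<forall>m<n-1. S m \<omega> > 0" using G_props by blast
        then show "(\<omega> \<in> {\<omega> \<in> space M. a < S i \<omega>}) = (\<omega> \<in> {\<omega> \<in> space M. \<forall>m<n - 1. s m < S m \<omega>})"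
          using i unfolding s_def by force
      qed
    qed
  qed measurable
  also have "\<dots> = (\<Prod>m<n-1. exp (- r m * max 0 (s m)))" by (rule surv[OF n])
  also have "\<dots> = (\<Prod>m<n-1. if m = i then exp (- r i * max 0 a) else 1)"
    by (rule prod.cong[OF refl]) (simp add: s_def)
  also have "\<dots> = exp (- r i * max 0 a)" using i by simp
  finally show ?thesis .
qed

lemma r_pos: "i < n - 1 \<Longrightarrow> r i > 0"
  unfolding r_def by simp

lemma S_exp:
  assumes n: "n \<ge> 1" and i: "i < n - 1"
  shows "distributed M lborel (S i) (exponential_density (r i))"
proof -
  have "prob {\<omega> \<in> space M. S i \<omega> \<le> a} = 1 - exp (- a * r i)" if a: "a \<ge> 0" for a
  proof -
    have "{\<omega> \<in> space M. S i \<omega> \<le> a} = space M - {\<omega> \<in> space M. a < S i \<omega>}" by auto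
    then have "prob {\<omega> \<in> space M. S i \<omega> \<le> a} = 1 - prob {\<omega> \<in> space M. a < S i \<omega>}"
      by (simp add: prob_compl)
    then show ?thesis using marginal[OF n i, of a] a by (simp add: mult.commute)
  qed
  then show ?thesis
    using exponential_distributed_iff[OF r_pos[OF i]] by simp
qed

lemma distr_eq:
  assumes n: "n \<ge> 1"
  shows "distr M (\<Pi>\<^sub>M i\<in>{..<n-1}. borel) (\<lambda>x. \<lambda>i\<in>{..<n-1}. S i x) = (\<Pi>\<^sub>M i\<in>{..<n-1}. distr M borel (S i))"
proof -
  let ?I = "{..<n-1}"
  let ?\<Omega> = "PiE ?I (\<lambda>_. UNIV :: real set)"
  define Gen :: "(nat \<Rightarrow> real) set set" where "Gen = {PiE ?I A | A. A \<in> Pi ?I (\<lambda>_. range greaterThan)}"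
  interpret D: prob_space "distr M borel (S i)" for i by (rule prob_space_distr) simp
  interpret product_sigma_finite "\<lambda>i. distr M borel (S i)"
    by standard
  have gen_eq: "Gen = {{f\<in>?\<Omega>. \<forall>i\<in>j. f i \<in> A i} | A j. j \<in> {?I} \<and> A \<in> Pi j (\<lambda>_. range greaterThan)}"
    unfolding Gen_def by (auto simp: PiE_def Pi_def)
  have sets_eq: "sets (\<Pi>\<^sub>M i\<in>?I. (borel :: real measure)) = sigma_sets ?\<Omega> Gen"
  proof -
    have "sets (\<Pi>\<^sub>M i\<in>?I. (borel :: real measure)) = sets (\<Pi>\<^sub>M i\<in>?I. sigma UNIV (range greaterThan :: real set set))"
      by (simp only: borel_Ioi)
    also have "\<dots> = sets (sigma ?\<Omega> {{f\<in>?\<Omega>. \<forall>i\<in>j. f i \<in> A i} | A j. j \<in> {?I} \<and> A \<in> Pi j (\<lambda>_. range greaterThan)})"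
    proof (rule sets_PiM_sigma)
      fix i :: nat
      show "\<exists>S\<subseteq>range greaterThan. countable S \<and> (UNIV :: real set) = \<Union>S"
      proof (intro exI conjI)
        show "range (\<lambda>k::nat. {- real k<..}) \<subseteq> range greaterThan" by auto
        show "countable (range (\<lambda>k::nat. {- real k<..}))" by simp
        show "(UNIV :: real set) = \<Union>(range (\<lambda>k::nat. {- real k<..}))"
        proof (safe)
          fix x :: real
          obtain k :: nat where "real k > - x" using reals_Archimedean2 by blast
          then have "- real k < x" by linarith
          then show "x \<in> \<Union>(range (\<lambda>k::nat. {- real k<..}))" by auto
        qed auto
      qed
    qed auto
    also have "\<dots> = sigma_sets ?\<Omega> Gen"
      unfolding gen_eq[symmetric] by (rule sets_measure_of) (auto simp: Gen_def)
    finally show ?thesis .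
  qed
  show ?thesis
  proof (rule measure_eqI_generator_eq[where E=Gen and \<Omega>="?\<Omega>"])
    show "Int_stable Gen"
      unfolding Int_stable_def
    proof (intro ballI)
      fix a b assume a: "a \<in> Gen" and b: "b \<in> Gen"
      then obtain A B where AB: "a = PiE ?I A" "A \<in> Pi ?I (\<lambda>_. range greaterThan)"
           "b = PiE ?I B" "B \<in> Pi ?I (\<lambda>_. range greaterThan)" unfolding Gen_def by blast
      have "a \<inter> b = PiE ?I (\<lambda>i. A i \<inter> B i)" using AB by (simp add: PiE_Int)
      moreover have "(\<lambda>i. A i \<inter> B i) \<in> Pi ?I (\<lambda>_. range greaterThan)"
      proof
        fix i assume "i \<in> ?I"
        then obtain x y where "A i = {x<..}" "B i = {y<..}" using AB by blast
        then have "A i \<inter> B i = {max x y<..}" by auto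
        then show "A i \<inter> B i \<in> range greaterThan" by blast
      qed
      ultimately show "a \<inter> b \<in> Gen" unfolding Gen_def by blast
    qed
    show "Gen \<subseteq> Pow ?\<Omega>" unfolding Gen_def by auto
    show "sets (distr M (\<Pi>\<^sub>M i\<in>?I. borel) (\<lambda>x. \<lambda>i\<in>?I. S i x)) = sigma_sets ?\<Omega> Gen"
      using sets_eq by simp
    show "sets (\<Pi>\<^sub>M i\<in>?I. distr M borel (S i)) = sigma_sets ?\<Omega> Gen"
      using sets_eq by (simp cong: sets_PiM_cong)
    define Ak where "Ak k = PiE ?I (\<lambda>_. {- real k<..})" for k :: nat
    show "range Ak \<subseteq> Gen" unfolding Ak_def Gen_def by auto
    show "(\<Union>k. Ak k) = ?\<Omega>"
    proof safe
      fix f assume f: "f \<in> ?\<Omega>"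
      obtain k :: nat where k: "real k > (\<Sum>i\<in>?I. \<bar>f i\<bar>)" using reals_Archimedean2 by blast
      have "\<bar>f i\<bar> \<le> (\<Sum>i\<in>?I. \<bar>f i\<bar>)" if "i \<in> ?I" for i
        by (rule member_le_sum) (use that in auto)
      then have "f \<in> Ak k" using f k unfolding Ak_def by (force simp: PiE_def)
      then show "f \<in> (\<Union>k. Ak k)" by blast
    qed (auto simp: Ak_def)
    show "emeasure (distr M (\<Pi>\<^sub>M i\<in>?I. borel) (\<lambda>x. \<lambda>i\<in>?I. S i x)) (Ak k) \<noteq> \<infinity>" for k
    proof -
      interpret P: prob_space "distr M (\<Pi>\<^sub>M i\<in>?I. borel) (\<lambda>x. \<lambda>i\<in>?I. S i x)"
        by (rule prob_space_distr) simp
      show ?thesis using P.emeasure_finite[of "Ak k"] by simp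
    qed
    fix Z assume "Z \<in> Gen"
    then obtain A where A: "Z = PiE ?I A" "A \<in> Pi ?I (\<lambda>_. range greaterThan)" unfolding Gen_def by blast
    then have "\<forall>i\<in>?I. \<exists>x. A i = {x<..}" by blast
    then obtain s where s: "\<And>i. i \<in> ?I \<Longrightarrow> A i = {s i<..}" by metis
    have Zs: "Z \<in> sets (\<Pi>\<^sub>M i\<in>?I. (borel :: real measure))"
      unfolding A(1) using s by (intro sets_PiM_I_finite) auto
    have "emeasure (distr M (\<Pi>\<^sub>M i\<in>?I. borel) (\<lambda>x. \<lambda>i\<in>?I. S i x)) Z
        = emeasure M ((\<lambda>x. \<lambda>i\<in>?I. S i x) -` Z \<inter> space M)"
      by (rule emeasure_distr[OF _ Zs]) simp
    also have "(\<lambda>x. \<lambda>i\<in>?I. S i x) -` Z \<inter> space M = {\<omega> \<in> space M. \<forall>m<n-1. s m < S m \<omega>}"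
      unfolding A(1) using s by (force simp: PiE_def Pi_def)
    also have "emeasure M {\<omega> \<in> space M. \<forall>m<n-1. s m < S m \<omega>} = ennreal (\<Prod>m<n-1. exp (- r m * max 0 (s m)))"
      using surv[OF n, of s] by (simp add: emeasure_eq_measure)
    also have "\<dots> = (\<Prod>m<n-1. ennreal (exp (- r m * max 0 (s m))))"
      by (rule prod_ennreal[symmetric]) simp
    also have "\<dots> = (\<Prod>i\<in>?I. emeasure (distr M borel (S i)) (A i))"
    proof (rule prod.cong[OF refl])
      fix i assume i: "i \<in> ?I"
      have "emeasure (distr M borel (S i)) (A i) = emeasure M (S i -` A i \<inter> space M)"
        using s[OF i] by (intro emeasure_distr) auto
      also have "S i -` A i \<inter> space M = {\<omega> \<in> space M. s i < S i \<omega>}" using s[OF i] by auto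
      finally show "ennreal (exp (- r i * max 0 (s i))) = emeasure (distr M borel (S i)) (A i)"
        using marginal[OF n, of i "s i"] i by (simp add: emeasure_eq_measure)
    qed
    also have "\<dots> = emeasure (\<Pi>\<^sub>M i\<in>?I. distr M borel (S i)) Z"
      unfolding A(1) using s by (subst emeasure_PiM) auto
    finally show "emeasure (distr M (\<Pi>\<^sub>M i\<in>?I. borel) (\<lambda>x. \<lambda>i\<in>?I. S i x)) Z = emeasure (\<Pi>\<^sub>M i\<in>?I. distr M borel (S i)) Z" .
  qed
qed

lemma indep:
  assumes n: "n \<ge> 1"
  shows "indep_vars (\<lambda>_. borel) S {..<n-1}"
proof (cases "n = 1")
  case True
  then show ?thesis by (simp add: indep_vars_def indep_sets_def)
next
  case False
  then have "0 \<in> {..<n-1}" using n by auto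
  then have "{..<n-1} \<noteq> {}" by blast
  then show ?thesis
    using indep_vars_iff_distr_eq_PiM[where I="{..<n-1}" and X=S and M'="\<lambda>_. borel"] distr_eq[OF n] by simp
qed

end


lemma abs_prod_le: "\<bar>a * b\<bar> \<le> a^2 + (b::real)^2"
proof -
  have "0 \<le> (\<bar>a\<bar> - \<bar>b\<bar>)^2" by simp
  then have "2 * \<bar>a\<bar> * \<bar>b\<bar> \<le> a^2 + b^2" by (simp add: power2_diff)
  moreover have "\<bar>a * b\<bar> \<le> 2 * \<bar>a\<bar> * \<bar>b\<bar>" by (simp add: abs_mult)
  ultimately show ?thesis by linarith
qed

lemma (in prob_space) sq_int_prod:
  fixes f g :: "'a \<Rightarrow> real"
  assumes [measurable]: "f \<in> borel_measurable M" "g \<in> borel_measurable M"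
  and "integrable M (\<lambda>x. f x ^ 2)" "integrable M (\<lambda>x. g x ^ 2)"
  shows "integrable M (\<lambda>x. f x * g x)"
proof (rule Bochner_Integration.integrable_bound[where f="\<lambda>x. f x ^ 2 + g x ^ 2"])
  show "integrable M (\<lambda>x. f x ^ 2 + g x ^ 2)" using assms by simp
  show "AE x in M. norm (f x * g x) \<le> norm (f x ^ 2 + g x ^ 2)"
  proof (rule AE_I2)
    fix x
    have "\<bar>f x * g x\<bar> \<le> f x ^ 2 + g x ^ 2" by (rule abs_prod_le)
    then show "norm (f x * g x) \<le> norm (f x ^ 2 + g x ^ 2)" by simp
  qed
qed simp

lemma (in prob_space) sum_sq_integrable:
  fixes Y :: "nat \<Rightarrow> 'a \<Rightarrow> real"
  assumes meas[measurable]: "\<And>i. Y i \<in> borel_measurable M"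
  and sq: "\<And>i. i < J \<Longrightarrow> integrable M (\<lambda>\<omega>. (Y i \<omega>)^2)"
  shows "integrable M (\<lambda>\<omega>. (\<Sum>i<J. Y i \<omega>)^2)"
proof -
  have eq: "(\<lambda>\<omega>. (\<Sum>i<J. Y i \<omega>)^2) = (\<lambda>\<omega>. \<Sum>a<J. \<Sum>b<J. Y a \<omega> * Y b \<omega>)"
    by (simp add: power2_eq_square sum_product)
  have ip: "integrable M (\<lambda>\<omega>. Y a \<omega> * Y b \<omega>)" if "a < J" "b < J" for a b
    by (rule sq_int_prod) (use that sq in auto)
  show ?thesis unfolding eq
    by (rule Bochner_Integration.integrable_sum, rule Bochner_Integration.integrable_sum, rule ip) auto
qed

lemma (in prob_space) var_sum:
  fixes Y :: "nat \<Rightarrow> 'a \<Rightarrow> real"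
  assumes ind: "indep_vars (\<lambda>_. borel) Y {..<J}"
  and meas[measurable]: "\<And>i. Y i \<in> borel_measurable M"
  and sq: "\<And>i. i < J \<Longrightarrow> integrable M (\<lambda>\<omega>. (Y i \<omega>)^2)"
  and mean: "\<And>i. i < J \<Longrightarrow> expectation (Y i) = 0"
  shows "expectation (\<lambda>\<omega>. (\<Sum>i<J. Y i \<omega>)^2) = (\<Sum>i<J. expectation (\<lambda>\<omega>. (Y i \<omega>)^2))"
proof -
  have int1: "integrable M (Y i)" if "i < J" for i
    using square_integrable_imp_integrable[OF meas sq[OF that]] .
  have eq: "(\<lambda>\<omega>. (\<Sum>i<J. Y i \<omega>)^2) = (\<lambda>\<omega>. \<Sum>a<J. \<Sum>b<J. Y a \<omega> * Y b \<omega>)"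
    by (simp add: power2_eq_square sum_product)
  have "expectation (\<lambda>\<omega>. (\<Sum>i<J. Y i \<omega>)^2) = (\<Sum>a<J. \<Sum>b<J. expectation (\<lambda>\<omega>. Y a \<omega> * Y b \<omega>))"
  proof -
    have ip: "integrable M (\<lambda>\<omega>. Y a \<omega> * Y b \<omega>)" if "a < J" "b < J" for a b
      by (rule sq_int_prod) (use that sq in auto)
    have "expectation (\<lambda>\<omega>. \<Sum>a<J. \<Sum>b<J. Y a \<omega> * Y b \<omega>) = (\<Sum>a<J. expectation (\<lambda>\<omega>. \<Sum>b<J. Y a \<omega> * Y b \<omega>))"
      by (rule Bochner_Integration.integral_sum, rule Bochner_Integration.integrable_sum, rule ip) auto
    also have "\<dots> = (\<Sum>a<J. \<Sum>b<J. expectation (\<lambda>\<omega>. Y a \<omega> * Y b \<omega>))"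
      by (intro sum.cong refl Bochner_Integration.integral_sum) (use ip in auto)
    finally show ?thesis unfolding eq .
  qed
  also have "\<dots> = (\<Sum>a<J. \<Sum>b<J. if a = b then expectation (\<lambda>\<omega>. (Y a \<omega>)^2) else 0)"
  proof (intro sum.cong refl)
    fix a b assume a: "a \<in> {..<J}" and b: "b \<in> {..<J}"
    show "expectation (\<lambda>\<omega>. Y a \<omega> * Y b \<omega>) = (if a = b then expectation (\<lambda>\<omega>. (Y a \<omega>)^2) else 0)"
    proof (cases "a = b")
      case True
      then show ?thesis by (simp add: power2_eq_square)
    next
      case False
      have ind2: "indep_vars (\<lambda>_. borel) Y {a, b}"
        by (rule indep_vars_subset[OF ind]) (use a b in auto)
      have "expectation (\<lambda>\<omega>. \<Prod>i\<in>{a,b}. Y i \<omega>) = (\<Prod>i\<in>{a,b}. expectation (Y i))"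
        by (rule indep_vars_lebesgue_integral[OF _ ind2]) (use a b int1 in auto)
      then show ?thesis using False mean a b by simp
    qed
  qed
  also have "\<dots> = (\<Sum>i<J. expectation (\<lambda>\<omega>. (Y i \<omega>)^2))"
    by simp
  finally show ?thesis .
qed

lemma PiM_comp_meas:
  "(\<lambda>f. f i) \<in> borel_measurable (Pi\<^sub>M I (\<lambda>_. (borel :: real measure)))"
proof (cases "i \<in> I")
  case True
  then show ?thesis by (rule measurable_component_singleton)
next
  case False
  have "(\<lambda>f. undefined :: real) \<in> borel_measurable (Pi\<^sub>M I (\<lambda>_. (borel :: real measure)))" by simp
  then show ?thesis
    by (rule measurable_cong[THEN iffD1, rotated]) (use False in \<open>auto simp: space_PiM PiE_def extensional_def\<close>)
qed

lemma (in prob_space) kolmogorov: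
  fixes Y :: "nat \<Rightarrow> 'a \<Rightarrow> real" and lam :: real
  assumes ind: "indep_vars (\<lambda>_. borel) Y {..<J}"
  and meas[measurable]: "\<And>i. Y i \<in> borel_measurable M"
  and sq: "\<And>i. i < J \<Longrightarrow> integrable M (\<lambda>\<omega>. (Y i \<omega>)^2)"
  and mean: "\<And>i. i < J \<Longrightarrow> expectation (Y i) = 0"
  and lam: "lam > 0"
  shows "prob {\<omega>\<in>space M. \<exists>j\<le>J. lam \<le> \<bar>\<Sum>i<j. Y i \<omega>\<bar>} * lam^2 \<le> expectation (\<lambda>\<omega>. (\<Sum>i<J. Y i \<omega>)^2)"
proof -
  define Z where "Z j \<omega> = (\<Sum>i<j. Y i \<omega>)" for j \<omega>
  define A where "A j = {\<omega>\<in>space M. lam \<le> \<bar>Z j \<omega>\<bar> \<and> (\<forall>i<j. \<bar>Z i \<omega>\<bar> < lam)}" for j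
  have Zm[measurable]: "Z j \<in> borel_measurable M" for j unfolding Z_def by measurable
  have A_sets[measurable]: "A j \<in> sets M" for j unfolding A_def by measurable
  have int1: "integrable M (Y i)" if "i < J" for i
    using square_integrable_imp_integrable[OF meas sq[OF that]] .
  have intZ: "integrable M (Z j)" if "j \<le> J" for j
    unfolding Z_def by (rule Bochner_Integration.integrable_sum, rule int1) (use that in auto)
  have intZ2: "integrable M (\<lambda>\<omega>. (Z J \<omega>)^2)"
    unfolding Z_def by (rule sum_sq_integrable[OF meas sq])
  have B_eq: "{\<omega>\<in>space M. \<exists>j\<le>J. lam \<le> \<bar>\<Sum>i<j. Y i \<omega>\<bar>} = (\<Union>j\<in>{..J}. A j)"
  proof
    show "{\<omega>\<in>space M. \<exists>j\<le>J. lam \<le> \<bar>\<Sum>i<j. Y i \<omega>\<bar>} \<subseteq> (\<Union>j\<in>{..J}. A j)"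
    proof
      fix \<omega> assume "\<omega> \<in> {\<omega>\<in>space M. \<exists>j\<le>J. lam \<le> \<bar>\<Sum>i<j. Y i \<omega>\<bar>}"
      then have sp: "\<omega> \<in> space M" and ex: "\<exists>j. j \<le> J \<and> lam \<le> \<bar>Z j \<omega>\<bar>" unfolding Z_def by auto
      then obtain j where j: "j \<le> J \<and> lam \<le> \<bar>Z j \<omega>\<bar>" "\<forall>m<j. \<not> (m \<le> J \<and> lam \<le> \<bar>Z m \<omega>\<bar>)"
        using exists_least_iff[of "\<lambda>j. j \<le> J \<and> lam \<le> \<bar>Z j \<omega>\<bar>"] by blast
      then have "\<omega> \<in> A j" using sp unfolding A_def by force
      then show "\<omega> \<in> (\<Union>j\<in>{..J}. A j)" using j by auto
    qed
    show "(\<Union>j\<in>{..J}. A j) \<subseteq> {\<omega>\<in>space M. \<exists>j\<le>J. lam \<le> \<bar>\<Sum>i<j. Y i \<omega>\<bar>}"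
      unfolding A_def Z_def by auto
  qed
  have disj_pt: "j = j'" if "\<omega> \<in> A j" "\<omega> \<in> A j'" for j j' \<omega>
  proof (rule ccontr)
    assume "j \<noteq> j'"
    then consider "j < j'" | "j' < j" by linarith
    then show False using that unfolding A_def by cases force+
  qed
  have disj: "disjoint_family_on A {..J}"
    unfolding disjoint_family_on_def using disj_pt by blast
  have probB: "prob (\<Union>j\<in>{..J}. A j) = (\<Sum>j\<le>J. prob (A j))"
    by (rule measure_finite_Union) (auto simp: disj)
  have keyj: "lam^2 * prob (A j) \<le> expectation (\<lambda>\<omega>. indicator (A j) \<omega> * (Z J \<omega>)^2)" if jJ: "j \<le> J" for j
  proof -
    define F1 where "F1 f = (if lam \<le> \<bar>\<Sum>i<j. f i\<bar> \<and> (\<forall>k<j. \<bar>\<Sum>i<k. f i\<bar> < lam) then 1 else 0) * (\<Sum>i<j. f i)" for f :: "nat \<Rightarrow> real"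
    define F2 where "F2 f = (\<Sum>i\<in>{j..<J}. f i)" for f :: "nat \<Rightarrow> real"
    define U where "U = F1 \<circ> (\<lambda>\<omega>. restrict (\<lambda>i. Y i \<omega>) {..<j})"
    define V where "V = F2 \<circ> (\<lambda>\<omega>. restrict (\<lambda>i. Y i \<omega>) {j..<J})"
    note [measurable] = PiM_comp_meas
    have F1m: "F1 \<in> borel_measurable (Pi\<^sub>M {..<j} (\<lambda>_. borel))" unfolding F1_def by measurable
    have F2m: "F2 \<in> borel_measurable (Pi\<^sub>M {j..<J} (\<lambda>_. borel))" unfolding F2_def by measurable
    have indUV: "indep_var borel U borel V"
      unfolding U_def V_def
      by (rule indep_var_compose[OF indep_var_restrict[OF ind] F1m F2m]) (use jJ in auto)
    have U_eq: "U \<omega> = indicator (A j) \<omega> * Z j \<omega>" if "\<omega> \<in> space M" for \<omega>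
      using that unfolding U_def F1_def A_def Z_def by (auto simp: indicator_def)
    have V_eq: "V \<omega> = Z J \<omega> - Z j \<omega>" for \<omega>
    proof -
      have "Z J \<omega> = (\<Sum>i\<in>{0..<J}. Y i \<omega>)" unfolding Z_def by (simp add: atLeast0LessThan)
      also have "\<dots> = (\<Sum>i\<in>{0..<j}. Y i \<omega>) + (\<Sum>i\<in>{j..<J}. Y i \<omega>)"
        by (rule sum.atLeastLessThan_concat[symmetric]) (use jJ in auto)
      also have "(\<Sum>i\<in>{0..<j}. Y i \<omega>) = Z j \<omega>" unfolding Z_def by (simp add: atLeast0LessThan)
      finally have "Z J \<omega> = Z j \<omega> + (\<Sum>i\<in>{j..<J}. Y i \<omega>)" .
      then show ?thesis unfolding V_def F2_def by simp
    qed
    have Um: "U \<in> borel_measurable M" unfolding U_def by (intro measurable_comp[OF _ F1m] measurable_restrict meas)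
    have Vm: "V \<in> borel_measurable M" unfolding V_def by (intro measurable_comp[OF _ F2m] measurable_restrict meas)
    have intU: "integrable M U"
    proof -
      have "integrable M (\<lambda>\<omega>. indicator (A j) \<omega> *\<^sub>R Z j \<omega>)"
        by (rule integrable_mult_indicator[OF A_sets intZ[OF jJ]])
      moreover have "integrable M U \<longleftrightarrow> integrable M (\<lambda>\<omega>. indicator (A j) \<omega> *\<^sub>R Z j \<omega>)"
        by (rule Bochner_Integration.integrable_cong) (auto simp: U_eq)
      ultimately show ?thesis by simp
    qed
    have intV: "integrable M V"
    proof -
      have "V = (\<lambda>\<omega>. Z J \<omega> - Z j \<omega>)" using V_eq by auto
      then show ?thesis using intZ[OF jJ] intZ[of J] by simp
    qed
    have EV: "expectation V = 0"
    proof -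
      have "expectation V = expectation (\<lambda>\<omega>. \<Sum>i\<in>{j..<J}. Y i \<omega>)"
        unfolding V_def F2_def by (simp add: comp_def)
      also have "\<dots> = (\<Sum>i\<in>{j..<J}. expectation (Y i))"
        by (rule Bochner_Integration.integral_sum, rule int1) auto
      also have "\<dots> = 0" using mean by simp
      finally show ?thesis .
    qed
    have EUV: "expectation (\<lambda>\<omega>. U \<omega> * V \<omega>) = 0"
      using indep_var_lebesgue_integral[OF indUV intU intV] EV by simp
    have intUV: "integrable M (\<lambda>\<omega>. U \<omega> * V \<omega>)"
      by (rule indep_var_integrable[OF indUV intU intV])
    have intind: "integrable M (\<lambda>\<omega>. indicator (A j) \<omega> * (Z J \<omega>)^2)"
      using integrable_mult_indicator[OF A_sets intZ2] by simp
    have pt: "lam^2 * indicator (A j) \<omega> + 2 * (U \<omega> * V \<omega>) \<le> indicator (A j) \<omega> * (Z J \<omega>)^2"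
      if sp: "\<omega> \<in> space M" for \<omega>
    proof (cases "\<omega> \<in> A j")
      case False
      then show ?thesis using U_eq[OF sp] by simp
    next
      case True
      then have "lam \<le> \<bar>Z j \<omega>\<bar>" unfolding A_def by blast
      then have "lam^2 \<le> (Z j \<omega>)^2" using lam
        by (metis abs_le_square_iff abs_of_pos)
      moreover have "(Z J \<omega>)^2 = (Z j \<omega>)^2 + 2 * (Z j \<omega> * (Z J \<omega> - Z j \<omega>)) + (Z J \<omega> - Z j \<omega>)^2"
        by (simp add: power2_eq_square algebra_simps)
      moreover have "0 \<le> (Z J \<omega> - Z j \<omega>)^2" by simp
      moreover have "U \<omega> * V \<omega> = Z j \<omega> * (Z J \<omega> - Z j \<omega>)" using U_eq[OF sp] V_eq[of \<omega>] True by simp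
      ultimately have "lam^2 + 2 * (U \<omega> * V \<omega>) \<le> (Z J \<omega>)^2" by linarith
      moreover have "indicator (A j) \<omega> = (1::real)" using True by simp
      ultimately show ?thesis by simp
    qed
    have intI: "integrable M (indicator (A j) :: 'a \<Rightarrow> real)"
      by (rule integrable_real_indicator) (auto simp: A_sets less_top[symmetric])
    have "expectation (\<lambda>\<omega>. lam^2 * indicator (A j) \<omega> + 2 * (U \<omega> * V \<omega>))
        = expectation (\<lambda>\<omega>. lam^2 * indicator (A j) \<omega>) + expectation (\<lambda>\<omega>. 2 * (U \<omega> * V \<omega>))"
      by (rule Bochner_Integration.integral_add) (use intUV intI in auto)
    also have "expectation (\<lambda>\<omega>. lam^2 * indicator (A j) \<omega>) = lam^2 * prob (A j)"
    proof -
      have "A j \<inter> space M = A j" using sets.sets_into_space[OF A_sets] by blast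
      then show ?thesis by simp
    qed
    also have "expectation (\<lambda>\<omega>. 2 * (U \<omega> * V \<omega>)) = 0" using EUV by simp
    finally have "lam^2 * prob (A j) = expectation (\<lambda>\<omega>. lam^2 * indicator (A j) \<omega> + 2 * (U \<omega> * V \<omega>))" by simp
    also have "\<dots> \<le> expectation (\<lambda>\<omega>. indicator (A j) \<omega> * (Z J \<omega>)^2)"
      by (rule integral_mono) (use intUV intind pt intI in auto)
    finally show ?thesis .
  qed
  have sum_ind: "(\<Sum>j\<le>J. indicator (A j) \<omega>) \<le> (1::real)" for \<omega>
  proof (cases "\<exists>j0\<le>J. \<omega> \<in> A j0")
    case True
    then obtain j0 where j0: "j0 \<le> J" "\<omega> \<in> A j0" by blast
    have "(\<Sum>j\<le>J. indicator (A j) \<omega>) = (\<Sum>j\<le>J. if j = j0 then 1 else (0::real))"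
      by (rule sum.cong[OF refl]) (use j0 disj_pt in \<open>auto simp: indicator_def\<close>)
    also have "\<dots> = 1" using j0 by simp
    finally show ?thesis by simp
  next
    case False
    then show ?thesis by (simp add: indicator_def)
  qed
  have "prob {\<omega>\<in>space M. \<exists>j\<le>J. lam \<le> \<bar>\<Sum>i<j. Y i \<omega>\<bar>} * lam^2 = (\<Sum>j\<le>J. lam^2 * prob (A j))"
    unfolding B_eq probB by (simp add: sum_distrib_left mult.commute)
  also have "\<dots> \<le> (\<Sum>j\<le>J. expectation (\<lambda>\<omega>. indicator (A j) \<omega> * (Z J \<omega>)^2))"
    by (rule sum_mono) (rule keyj, simp)
  also have "\<dots> = expectation (\<lambda>\<omega>. \<Sum>j\<le>J. indicator (A j) \<omega> * (Z J \<omega>)^2)"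
    by (rule Bochner_Integration.integral_sum[symmetric]) (use integrable_mult_indicator[OF A_sets intZ2] in simp)
  also have "\<dots> \<le> expectation (\<lambda>\<omega>. (Z J \<omega>)^2)"
  proof (rule integral_mono)
    show "integrable M (\<lambda>\<omega>. \<Sum>j\<le>J. indicator (A j) \<omega> * (Z J \<omega>)^2)"
      by (rule Bochner_Integration.integrable_sum) (use integrable_mult_indicator[OF A_sets intZ2] in simp)
    show "integrable M (\<lambda>\<omega>. (Z J \<omega>)^2)" by (rule intZ2)
    fix \<omega>
    have "(\<Sum>j\<le>J. indicator (A j) \<omega> * (Z J \<omega>)^2) = (\<Sum>j\<le>J. indicator (A j) \<omega>) * (Z J \<omega>)^2"
      by (simp add: sum_distrib_right)
    also have "\<dots> \<le> 1 * (Z J \<omega>)^2" by (rule mult_right_mono[OF sum_ind]) simp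
    finally show "(\<Sum>j\<le>J. indicator (A j) \<omega> * (Z J \<omega>)^2) \<le> (Z J \<omega>)^2" by simp
  qed
  finally show ?thesis unfolding Z_def .
qed



context kjh
begin

lemma hit_time_eq:
  assumes G: "\<omega> \<in> G" and k: "1 \<le> k" "k \<le> n"
  shows "hit_time n X S k \<omega> = (\<Sum>i<n-k. S i \<omega>)"
proof -
  have Spos: "\<And>m. m < n - 1 \<Longrightarrow> S m \<omega> > 0" and cardX: "\<And>m. m \<le> n - 1 \<Longrightarrow> card (X m \<omega>) = n - m"
    using G_props[OF G] by auto
  define a where "a = (\<Sum>i<n-k. S i \<omega>)"
  define Nt where "Nt t = card {j. j < n - 1 \<and> (\<Sum>i\<le>j. S i \<omega>) \<le> t}" for t
  have Nt_le: "Nt t \<le> n - 1" for t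
  proof -
    have "Nt t \<le> card {..<n-1}" unfolding Nt_def by (rule card_mono) auto
    then show ?thesis by simp
  qed
  have proc: "card (kingman_proc n X S t \<omega>) = n - Nt t" for t
    unfolding kingman_proc_def Nt_def[symmetric] using cardX[OF Nt_le] by simp
  have iff: "card (kingman_proc n X S t \<omega>) = k \<longleftrightarrow> Nt t = n - k" for t
    using proc[of t] Nt_le[of t] k by auto
  have a_nonneg: "0 \<le> a" unfolding a_def using Spos k by (intro sum_nonneg) (auto intro: less_imp_le)
  have le_a: "(\<Sum>i\<le>j. S i \<omega>) \<le> a" if "j < n - k" for j
    unfolding a_def
  proof (rule sum_mono2)
    show "{..j} \<subseteq> {..<n-k}" using that by auto
    show "\<And>b. b \<in> {..<n - k} - {..j} \<Longrightarrow> 0 \<le> S b \<omega>" using Spos k by (auto intro: less_imp_le)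
  qed simp
  have gt_a: "a < (\<Sum>i\<le>j. S i \<omega>)" if "n - k \<le> j" "j < n - 1" for j
  proof -
    have "a + S j \<omega> = (\<Sum>i\<in>insert j {..<n-k}. S i \<omega>)" unfolding a_def using that by simp
    also have "\<dots> \<le> (\<Sum>i\<le>j. S i \<omega>)"
    proof (rule sum_mono2)
      show "insert j {..<n-k} \<subseteq> {..j}" using that by auto
      show "\<And>b. b \<in> {..j} - insert j {..<n - k} \<Longrightarrow> 0 \<le> S b \<omega>" using Spos that by (auto intro: less_imp_le)
    qed simp
    finally show ?thesis using Spos[OF that(2)] by simp
  qed
  have Na: "Nt a = n - k"
  proof -
    have "{j. j < n - 1 \<and> (\<Sum>i\<le>j. S i \<omega>) \<le> a} = {..<n-k}"
    proof safe
      fix j assume "j < n - 1" "(\<Sum>i\<le>j. S i \<omega>) \<le> a"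
      then show "j < n - k" using gt_a[of j] by (meson not_le not_less)
    next
      fix j assume "j < n - k"
      then show "j < n - 1" using k by simp
      show "(\<Sum>i\<le>j. S i \<omega>) \<le> a" using le_a \<open>j < n - k\<close> by blast
    qed
    then show ?thesis unfolding Nt_def by simp
  qed
  have min: "a \<le> t" if t: "t \<in> {t. 0 \<le> t \<and> card (kingman_proc n X S t \<omega>) = k}" for t
  proof (rule ccontr)
    assume "\<not> a \<le> t"
    then have ta: "t < a" by simp
    have "n - k \<noteq> 0"
    proof
      assume "n - k = 0" then have "a = 0" unfolding a_def by simp
      then show False using ta t by simp
    qed
    have "{j. j < n - 1 \<and> (\<Sum>i\<le>j. S i \<omega>) \<le> t} \<subseteq> {..<n-k-1}"
    proof safe
      fix j assume j: "j < n - 1" "(\<Sum>i\<le>j. S i \<omega>) \<le> t"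
      show "j < n - k - 1"
      proof (rule ccontr)
        assume "\<not> j < n - k - 1"
        then have "n - k - 1 \<le> j" by simp
        have "a \<le> (\<Sum>i\<le>j. S i \<omega>)"
          unfolding a_def
        proof (rule sum_mono2)
          show "{..<n-k} \<subseteq> {..j}" using \<open>n - k - 1 \<le> j\<close> \<open>n - k \<noteq> 0\<close> by auto
          show "\<And>b. b \<in> {..j} - {..<n - k} \<Longrightarrow> 0 \<le> S b \<omega>" using Spos j by (auto intro: less_imp_le)
        qed simp
        then show False using j ta by simp
      qed
    qed
    then have "Nt t \<le> card {..<n-k-1}" unfolding Nt_def by (intro card_mono) auto
    then have "Nt t < n - k" using \<open>n - k \<noteq> 0\<close> by simp
    moreover have "Nt t = n - k" using t iff by simp
    ultimately show False by simp
  qed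
  have "hit_time n X S k \<omega> = Inf {t. 0 \<le> t \<and> card (kingman_proc n X S t \<omega>) = k}"
    unfolding hit_time_def ..
  also have "\<dots> = a"
  proof (rule cInf_eq_minimum)
    show "a \<in> {t. 0 \<le> t \<and> card (kingman_proc n X S t \<omega>) = k}" using a_nonneg Na iff by simp
  qed (rule min)
  finally show ?thesis unfolding a_def .
qed

end


lemma real_choose2: "real (m choose 2) = real m * (real m - 1) / 2"
proof (cases m)
  case 0
  then show ?thesis by simp
next
  case (Suc k)
  have ev: "even (m * (m - 1))" by auto
  have "real (m choose 2) = real (m * (m - 1) div 2)" by (simp add: choose_two)
  also have "\<dots> = real (m * (m - 1)) / 2" using ev by (simp add: real_of_nat_div)
  also have "\<dots> = real m * (real m - 1) / 2" using Suc by (simp add: of_nat_diff algebra_simps)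
  finally show ?thesis .
qed

lemma tele: "J < n \<Longrightarrow> (\<Sum>i<J. 1 / (real (n-i) * real (n-i-1))) = 1 / real (n-J) - 1 / real n"
proof (induction J)
  case 0
  then show ?case by simp
next
  case (Suc J)
  then have IH: "(\<Sum>i<J. 1 / (real (n-i) * real (n-i-1))) = 1 / real (n-J) - 1 / real n" by simp
  define y where "y = real (n - Suc J)"
  have y: "y > 0" using Suc.prems unfolding y_def by simp
  have x: "real (n - J) = y + 1" unfolding y_def using Suc.prems by simp
  have "real (n - J - 1) = y" unfolding y_def by simp
  then have "1 / (real (n-J) * real (n-J-1)) = 1 / y - 1 / (y + 1)"
    using x y by (simp add: field_simps)
  then show ?case using IH x by (simp add: y_def)
qed

lemma tele_sq: assumes "J < n"
  shows "(\<Sum>i<J. 1 / (real (n-i) * real (n-i-1))^2) \<le> 1 / real (n-J)^3"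
proof -
  define K where "K = real (n - J)"
  have K: "K \<ge> 1" unfolding K_def using assms by simp
  have trm: "1 / (real (n-i) * real (n-i-1))^2 \<le> (1 / K^2) * (1 / (real (n-i) * real (n-i-1)))" if i: "i < J" for i
  proof -
    define p where "p = real (n-i) * real (n-i-1)"
    have a: "real (n-i) \<ge> K" "real (n-i-1) \<ge> K" unfolding K_def using i assms by auto
    have "K * K \<le> p" unfolding p_def using a K by (intro mult_mono) auto
    then have pK: "K^2 \<le> p" by (simp add: power2_eq_square)
    have pp: "p > 0" using pK K by (smt (verit) one_le_power)
    have "1 / p^2 = (1/p) * (1/p)" by (simp add: power2_eq_square)
    also have "\<dots> \<le> (1 / K^2) * (1/p)"
      by (rule mult_right_mono) (use pK pp K in \<open>auto intro!: divide_left_mono\<close>)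
    finally show ?thesis unfolding p_def .
  qed
  have "(\<Sum>i<J. 1 / (real (n-i) * real (n-i-1))^2) \<le> (\<Sum>i<J. (1 / K^2) * (1 / (real (n-i) * real (n-i-1))))"
    by (rule sum_mono) (use trm in auto)
  also have "\<dots> = (1 / K^2) * (\<Sum>i<J. 1 / (real (n-i) * real (n-i-1)))"
    by (rule sum_distrib_left[symmetric])
  also have "\<dots> = (1 / K^2) * (1 / K - 1 / real n)"
    by (simp only: tele[OF assms] K_def)
  also have "\<dots> \<le> (1 / K^2) * (1 / K)"
    using K by (intro mult_left_mono) auto
  also have "\<dots> = 1 / K^3" by (simp add: power2_eq_square power3_eq_cube)
  finally show ?thesis unfolding K_def .
qed

context kjh
begin

lemma inv_r: "i < n - 1 \<Longrightarrow> 1 / r i = 2 / (real (n-i) * real (n-i-1))"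
  unfolding r_def real_choose2 by (simp add: of_nat_diff)

lemma Y_facts:
  assumes n: "n \<ge> 1" and i: "i < n - 1"
  shows "integrable M (\<lambda>\<omega>. (S i \<omega> - 1 / r i)^2)"
    and "expectation (\<lambda>\<omega>. S i \<omega> - 1 / r i) = 0"
    and "expectation (\<lambda>\<omega>. (S i \<omega> - 1 / r i)^2) = 1 / (r i)^2"
proof -
  have D: "distributed M lborel (S i) (erlang_density 0 (r i))" using S_exp[OF n i] .
  have rp: "r i > 0" using r_pos[OF i] .
  have int1: "integrable M (S i)" using erlang_ith_moment_integrable[OF rp D, of 1] by simp
  have int2: "integrable M (\<lambda>x. S i x ^ 2)" using erlang_ith_moment_integrable[OF rp D, of 2] .
  have E1: "expectation (S i) = 1 / r i" using exponential_distributed_expectation[OF rp D] .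
  have E2: "expectation (\<lambda>x. S i x ^ 2) = 2 / (r i)^2" using erlang_ith_moment[OF rp D, of 2] by simp
  define c where "c = 1 / r i"
  have eq: "(\<lambda>\<omega>. (S i \<omega> - c)^2) = (\<lambda>\<omega>. (S i \<omega> ^ 2 - 2 * c * S i \<omega>) + c^2)"
    by (simp add: power2_eq_square algebra_simps)
  show "integrable M (\<lambda>\<omega>. (S i \<omega> - 1 / r i)^2)"
    unfolding c_def[symmetric] eq using int1 int2 by simp
  show "expectation (\<lambda>\<omega>. S i \<omega> - 1 / r i) = 0"
    using int1 E1 by (simp add: prob_space)
  have "expectation (\<lambda>\<omega>. (S i \<omega> - c)^2) = expectation (\<lambda>\<omega>. S i \<omega> ^ 2 - 2 * c * S i \<omega>) + c^2"
    unfolding eq by (subst Bochner_Integration.integral_add) (use int1 int2 in \<open>auto simp: prob_space\<close>)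
  also have "expectation (\<lambda>\<omega>. S i \<omega> ^ 2 - 2 * c * S i \<omega>) = 2 / (r i)^2 - 2 * c * (1 / r i)"
    by (subst Bochner_Integration.integral_diff) (use int1 int2 E1 E2 in auto)
  finally show "expectation (\<lambda>\<omega>. (S i \<omega> - 1 / r i)^2) = 1 / (r i)^2"
    unfolding c_def using rp by (simp add: power2_eq_square field_simps)
qed

end


theorem lemma17:
  fixes \<epsilon> :: real
  assumes "\<epsilon> > 0"
  shows "\<exists>C>0. \<forall>n::nat. n \<ge> 1 \<longrightarrow>
           (\<forall>(M::'a measure) X S. kingman_jump_hold M n X S \<longrightarrow>
              (\<exists>A \<in> sets M. measure M A \<ge> 1 - \<epsilon> \<and>
                 (\<forall>\<omega>\<in>A. \<forall>k::nat. real n powr (3/4) \<le> real k \<and> k \<le> n \<longrightarrow>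
                    \<bar>hit_time n X S k \<omega> - (2 / real k - 2 / real n)\<bar>
                      \<le> C / real n powr (9/8))))"
proof -
  define C where "C = 2 / sqrt \<epsilon>"
  have Cpos: "C > 0" using assms by (simp add: C_def)
  have C2: "4 / C^2 = \<epsilon>" using assms by (simp add: C_def power_divide)
  show ?thesis
  proof (intro exI[of _ C] conjI allI impI Cpos)
    fix n :: nat and M :: "'a measure" and X S
    assume n: "n \<ge> 1" and kj: "kingman_jump_hold M n X S"
    interpret kjh M n X S using kj by (rule kjh.intro)
    define K where "K = nat \<lceil>real n powr (3/4)\<rceil>"
    have npos: "real n powr (3/4) > 0" using n by simp
    have Kge: "real n powr (3/4) \<le> real K"
      unfolding K_def using npos by (metis ceiling_le_zero le_of_int_ceiling linorder_not_le of_nat_nat order_less_imp_le)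
    have "0 < \<lceil>real n powr (3/4)\<rceil>" using npos by simp
    then have K1: "K \<ge> 1" unfolding K_def by linarith
    have "real n powr (3/4) \<le> real n powr 1" using n by (intro powr_mono) auto
    then have "real n powr (3/4) \<le> real n" using n by simp
    then have Kn: "K \<le> n" unfolding K_def by (simp add: ceiling_le_iff nat_le_iff)
    define J where "J = n - K"
    have J: "J < n" "J \<le> n - 1" "n - J = K" using K1 Kn n unfolding J_def by auto
    define lam where "lam = C / real n powr (9/8)"
    have lampos: "lam > 0" unfolding lam_def using Cpos n by simp
    define Y where "Y i \<omega> = S i \<omega> - 1 / r i" for i \<omega>
    have Yf: "Y i = (\<lambda>\<omega>. S i \<omega> - 1 / r i)" for i by (simp add: fun_eq_iff Y_def)
    have Ym[measurable]: "Y i \<in> borel_measurable M" for i unfolding Y_def by measurable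
    have indY: "indep_vars (\<lambda>_. borel) Y {..<J}"
    proof -
      have "indep_vars (\<lambda>_. borel) S {..<J}"
        by (rule indep_vars_subset[OF indep[OF n]]) (use J in auto)
      then have "indep_vars (\<lambda>_. borel) (\<lambda>i x. (\<lambda>y. y - 1 / r i) (S i x)) {..<J}"
        by (rule indep_vars_compose2) simp
      then show ?thesis unfolding Y_def by simp
    qed
    have iJ: "i < n - 1" if "i < J" for i using that J by simp
    define Bad where "Bad = {\<omega>\<in>space M. \<exists>j\<le>J. lam \<le> \<bar>\<Sum>i<j. Y i \<omega>\<bar>}"
    have Bad_sets: "Bad \<in> sets M" unfolding Bad_def by measurable
    have kol: "prob Bad * lam^2 \<le> expectation (\<lambda>\<omega>. (\<Sum>i<J. Y i \<omega>)^2)"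
      unfolding Bad_def
      by (rule kolmogorov[OF indY Ym _ _ lampos]) (use Y_facts[OF n iJ] in \<open>auto simp: Y_def Yf\<close>)
    have "expectation (\<lambda>\<omega>. (\<Sum>i<J. Y i \<omega>)^2) = (\<Sum>i<J. expectation (\<lambda>\<omega>. (Y i \<omega>)^2))"
      by (rule var_sum[OF indY Ym]) (use Y_facts[OF n iJ] in \<open>auto simp: Y_def Yf\<close>)
    also have "\<dots> = (\<Sum>i<J. 4 * (1 / (real (n-i) * real (n-i-1))^2))"
    proof (rule sum.cong[OF refl])
      fix i assume i: "i \<in> {..<J}"
      have "expectation (\<lambda>\<omega>. (Y i \<omega>)^2) = (1 / r i)^2"
        using Y_facts(3)[OF n iJ] i by (simp add: Y_def power_one_over)
      also have "\<dots> = 4 * (1 / (real (n-i) * real (n-i-1))^2)"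
        using inv_r[OF iJ] i by (simp add: power_divide)
      finally show "expectation (\<lambda>\<omega>. (Y i \<omega>)^2) = 4 * (1 / (real (n-i) * real (n-i-1))^2)" .
    qed
    also have "\<dots> = 4 * (\<Sum>i<J. 1 / (real (n-i) * real (n-i-1))^2)"
      by (simp add: sum_distrib_left)
    also have "\<dots> \<le> 4 * (1 / real K^3)"
      using tele_sq[OF J(1)] J(3) by simp
    finally have kol2: "prob Bad * lam^2 \<le> 4 / real K^3" using kol by simp
    define P where "P = real n powr (9/4)"
    have Ppos: "P > 0" unfolding P_def using n by simp
    have lam2: "lam^2 = C^2 / P"
    proof -
      have "(real n powr (9/8))^2 = real n powr (9/8) * real n powr (9/8)" by (simp add: power2_eq_square)
      also have "\<dots> = P" unfolding P_def by (simp add: powr_add[symmetric])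
      finally show ?thesis unfolding lam_def by (simp add: power_divide)
    qed
    have K3: "P \<le> real K^3"
    proof -
      have "P = (real n powr (3/4))^3"
        unfolding P_def using n by (simp add: powr_realpow[symmetric] powr_powr)
      also have "\<dots> \<le> real K^3" using Kge npos by (intro power_mono) auto
      finally show ?thesis .
    qed
    have "prob Bad * C^2 / P \<le> 4 / P"
    proof -
      have "prob Bad * C^2 / P = prob Bad * lam^2" using lam2 by simp
      also have "\<dots> \<le> 4 / real K^3" by (rule kol2)
      also have "\<dots> \<le> 4 / P"
      proof -
        have "0 < real K ^ 3" using K3 Ppos by linarith
        then show ?thesis using K3 Ppos by (intro divide_left_mono) auto
      qed
      finally show ?thesis .
    qed
    then have "prob Bad * C^2 \<le> 4" using Ppos by (simp add: divide_right_mono_neg field_simps)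
    moreover have "\<epsilon> * C^2 = 4" using Cpos C2 by (simp add: field_simps)
    ultimately have "prob Bad * C^2 \<le> \<epsilon> * C^2" by simp
    moreover have "C^2 > 0" using Cpos by simp
    ultimately have probBad: "prob Bad \<le> \<epsilon>" by (meson mult_le_cancel_right_pos)
    define A where "A = G - Bad"
    have A_sets: "A \<in> sets M" unfolding A_def using G_sets Bad_sets by blast
    show "\<exists>A \<in> sets M. measure M A \<ge> 1 - \<epsilon> \<and>
                 (\<forall>\<omega>\<in>A. \<forall>k::nat. real n powr (3/4) \<le> real k \<and> k \<le> n \<longrightarrow>
                    \<bar>hit_time n X S k \<omega> - (2 / real k - 2 / real n)\<bar>
                      \<le> C / real n powr (9/8))"
    proof (intro bexI[of _ A] conjI ballI allI impI A_sets)
      have "prob G \<le> prob (A \<union> Bad)" unfolding A_def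
        by (rule finite_measure_mono) (use Bad_sets G_sets in auto)
      also have "\<dots> \<le> prob A + prob Bad" by (rule measure_subadditive) (use A_sets Bad_sets in auto)
      finally show "1 - \<epsilon> \<le> prob A" using G_prob[OF n] probBad by simp
    next
      fix \<omega> k assume \<omega>: "\<omega> \<in> A" and k: "real n powr (3/4) \<le> real k \<and> k \<le> n"
      have kK: "K \<le> k" unfolding K_def using k by (simp add: ceiling_le_iff nat_le_iff)
      have k1: "1 \<le> k" using kK K1 by simp
      have \<omega>G: "\<omega> \<in> G" and \<omega>B: "\<omega> \<notin> Bad" using \<omega> unfolding A_def by auto
      have sp: "\<omega> \<in> space M" using G_props[OF \<omega>G] by blast
      have jJ: "n - k \<le> J" unfolding J_def using kK by simp
      have small: "\<bar>\<Sum>i<n-k. Y i \<omega>\<bar> < lam" using \<omega>B sp jJ unfolding Bad_def by force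
      have "(\<Sum>i<n-k. 1 / r i) = (\<Sum>i<n-k. 2 * (1 / (real (n-i) * real (n-i-1))))"
        by (rule sum.cong[OF refl]) (use inv_r k1 in auto)
      also have "\<dots> = 2 * (\<Sum>i<n-k. 1 / (real (n-i) * real (n-i-1)))"
        by (rule sum_distrib_left[symmetric])
      also have "(\<Sum>i<n-k. 1 / (real (n-i) * real (n-i-1))) = 1 / real k - 1 / real n"
        using tele[of "n-k" n] k k1 by simp
      finally have mean: "(\<Sum>i<n-k. 1 / r i) = 2 / real k - 2 / real n" by simp
      have "hit_time n X S k \<omega> = (\<Sum>i<n-k. S i \<omega>)" by (rule hit_time_eq[OF \<omega>G k1]) (use k in auto)
      also have "\<dots> = (\<Sum>i<n-k. Y i \<omega>) + (\<Sum>i<n-k. 1 / r i)"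
        unfolding Y_def by (simp add: sum_subtractf)
      finally have "hit_time n X S k \<omega> - (2 / real k - 2 / real n) = (\<Sum>i<n-k. Y i \<omega>)"
        using mean by simp
      then show "\<bar>hit_time n X S k \<omega> - (2 / real k - 2 / real n)\<bar> \<le> C / real n powr (9/8)"
        using small unfolding lam_def by simp
    qed
  qed
qed


end
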